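(* In the no-regret model with signal sets $S_i=A_i\sqcup\{\bot\}$, consider the following principal algorithm with hyperparameter $L$. For each agent $i=1,\dots,n$ and each $a_{-i}\in A_{-i}$: set $\mathbf{p}^1=\mathbf{1}\in\mathbb{R}^{A_i}$; for $\ell=1,\dots,L$ (one round $t$ each), set $P_i^t(\cdot)=\mathbf{p}^\ell[\cdot]$ and $P_j^t(a_j')=2\cdot\mathbb{1}[a_j'=a_j]$ for all $j\ne i$ (where $a_j$ is $j$'s action in $a_{-i}$), send signals $s_i^t=\bot$ and $s_j^t=a_j$ for $j\ne i$, observe $a^t$, and set $\mathbf{p}^{\ell+1}=\Pi_{\mathcal{P}_i}[\mathbf{p}^\ell-\eta\mathbf{e}_{a_i^t}]$ with $\eta=\sqrt{m_i/L}$ and $\mathcal{P}_i=\{\mathbf{p}\in[0,2]^{A_i}:\langle\mathbf{1},\mathbf{p}\rangle=m_i\}$; then set $\tilde U_i(\cdot,a_{-i})=-\frac1L\sum_{\ell=1}^L\mathbf{p}^\ell$. Output $\tilde U$. For an appropriate choice of $L$, this algorithm $\varepsilon$-learns any game in $\mathrm{poly}(M)/\varepsilon^2$ rounds.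
   Context: A normal-form game has agents $i\in[n]$, finite action sets $A_i$ with $|A_i|=m_i\ge2$, $A=\prod_iA_i$, $m=\max_i m_i$, $M=\prod_i m_i$, and unknown utilities $U_i:A\to[0,1]$. In each round $t\le T$ the principal chooses payments $P_i^t:A_i\to\mathbb{R}_+$ and sends each agent a signal $s_i^t$ from a finite set $S_i$; agent $i$'s utility that round is $U_i^t(a)=U_i(a)+P_i^t(a_i)$; agents choose actions and the principal observes $a^t$. No-regret model: there is a constant $C\le\mathrm{poly}(M)$ such that for every agent $i$, signal $s_i\in S_i$ and every $t\le T$, $\hat R_i(t,s_i):=\max_{a_i\in A_i}\sum_{\tau\le t,\,s_i^\tau=s_i}[U_i^\tau(a_i,a_{-i}^\tau)-U_i^\tau(a^\tau)]\le C\sqrt{T}$. $\Pi$ denotes Euclidean projection, $\mathbf{e}_a$ the unit vector. The principal $\varepsilon$-learns the game if it outputs $\tilde U_i:A\to\mathbb{R}$ such that there exist $W_i:A_{-i}\to\mathbb{R}$ with $|U_i(a)+W_i(a_{-i})-\tilde U_i(a)|\le\varepsilon$ for all $i$ and $a$. *)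

theory Defs
  imports "HOL-Analysis.Analysis" "HOL-Library.FuncSet"
begin

text \<open>Agents are 0,...,n-1; agent i has actions 0,...,m i - 1.
  Action profiles are extensional functions on the agent set.\<close>

definition profiles :: "nat \<Rightarrow> (nat \<Rightarrow> nat) \<Rightarrow> (nat \<Rightarrow> nat) set" where
  "profiles n m = PiE {..<n} (\<lambda>j. {..<m j})"

definition opp_profiles :: "nat \<Rightarrow> (nat \<Rightarrow> nat) \<Rightarrow> nat \<Rightarrow> (nat \<Rightarrow> nat) set" where
  "opp_profiles n m i = PiE ({..<n} - {i}) (\<lambda>j. {..<m j})"

definition polyP :: "nat \<Rightarrow> (nat \<Rightarrow> real) set" where
  "polyP mi = {p. (\<forall>x<mi. 0 \<le> p x \<and> p x \<le> 2) \<and> (\<Sum>x<mi. p x) = real mi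
                   \<and> (\<forall>x\<ge>mi. p x = 0)}"

definition projP :: "nat \<Rightarrow> (nat \<Rightarrow> real) \<Rightarrow> (nat \<Rightarrow> real)" where
  "projP mi q = (THE p. p \<in> polyP mi \<and>
      (\<forall>p'\<in>polyP mi. (\<Sum>x<mi. (q x - p x)^2) \<le> (\<Sum>x<mi. (q x - p' x)^2)))"

text \<open>The iterates p^1, p^2, ... (0-indexed: pseq ... 0 = p^1 = all-ones vector);
  acts l is agent i's action in the l-th round of the block.\<close>
primrec pseq :: "nat \<Rightarrow> real \<Rightarrow> (nat \<Rightarrow> nat) \<Rightarrow> nat \<Rightarrow> nat \<Rightarrow> real" where
  "pseq mi eta acts 0 = (\<lambda>x. if x < mi then 1 else 0)"
| "pseq mi eta acts (Suc l) =
     projP mi (\<lambda>x. pseq mi eta acts l x - eta * (if x = acts l then 1 else 0))"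

text \<open>The schedule: blocks is the list of pairs (i, a_{-i}) processed in order;
  block k occupies rounds k*L, ..., k*L + L - 1 (rounds are 0-indexed).
  a t is the action profile observed in round t.\<close>

definition block_iterate :: "(nat \<Rightarrow> nat) \<Rightarrow> (nat \<times> (nat \<Rightarrow> nat)) list \<Rightarrow> nat
    \<Rightarrow> (nat \<Rightarrow> nat \<Rightarrow> nat) \<Rightarrow> nat \<Rightarrow> nat \<Rightarrow> nat \<Rightarrow> real" where
  "block_iterate m blocks L a k l =
     (let i = fst (blocks ! k)
      in pseq (m i) (sqrt (real (m i) / real L)) (\<lambda>l'. a (k * L + l') i) l)"

definition alg_pay :: "(nat \<Rightarrow> nat) \<Rightarrow> (nat \<times> (nat \<Rightarrow> nat)) list \<Rightarrow> nat
    \<Rightarrow> (nat \<Rightarrow> nat \<Rightarrow> nat) \<Rightarrow> nat \<Rightarrow> nat \<Rightarrow> nat \<Rightarrow> real" where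
  "alg_pay m blocks L a t j x =
     (let k = t div L; (i, b) = blocks ! k
      in if j = i then block_iterate m blocks L a k (t mod L) x
         else (if x = b j then 2 else 0))"

text \<open>Signals: None stands for the extra signal bot.\<close>
definition alg_signal :: "(nat \<times> (nat \<Rightarrow> nat)) list \<Rightarrow> nat \<Rightarrow> nat \<Rightarrow> nat \<Rightarrow> nat option" where
  "alg_signal blocks L t j =
     (let (i, b) = blocks ! (t div L) in if j = i then None else Some (b j))"

definition alg_output :: "nat \<Rightarrow> (nat \<Rightarrow> nat) \<Rightarrow> (nat \<times> (nat \<Rightarrow> nat)) list \<Rightarrow> nat
    \<Rightarrow> (nat \<Rightarrow> nat \<Rightarrow> nat) \<Rightarrow> nat \<Rightarrow> (nat \<Rightarrow> nat) \<Rightarrow> real" where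
  "alg_output n m blocks L a i act =
     (let k = (THE k. k < length blocks \<and> blocks ! k = (i, restrict act ({..<n} - {i})))
      in - (1 / real L) * (\<Sum>l<L. block_iterate m blocks L a k l (act i)))"

definition valid_blocks :: "nat \<Rightarrow> (nat \<Rightarrow> nat) \<Rightarrow> (nat \<times> (nat \<Rightarrow> nat)) list \<Rightarrow> bool" where
  "valid_blocks n m blocks \<longleftrightarrow> distinct blocks \<and> sorted (map fst blocks) \<and>
     set blocks = {(i, b). i < n \<and> b \<in> opp_profiles n m i}"

text \<open>No-regret condition with horizon T and constant C, for payments P t j x,
  signals s t j, and realized profiles a t; sums run over rounds tau < t
  (i.e. rounds 1..t in 1-indexed notation), t \<le> T.\<close>
definition no_regret :: "nat \<Rightarrow> (nat \<Rightarrow> nat) \<Rightarrow> (nat \<Rightarrow> (nat \<Rightarrow> nat) \<Rightarrow> real)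
    \<Rightarrow> (nat \<Rightarrow> nat \<Rightarrow> nat \<Rightarrow> real) \<Rightarrow> (nat \<Rightarrow> nat \<Rightarrow> nat option)
    \<Rightarrow> (nat \<Rightarrow> nat \<Rightarrow> nat) \<Rightarrow> nat \<Rightarrow> real \<Rightarrow> bool" where
  "no_regret n m U P s a T C \<longleftrightarrow>
     (\<forall>j<n. \<forall>sg. (sg = None \<or> (\<exists>y<m j. sg = Some y)) \<longrightarrow>
        (\<forall>t\<le>T. \<forall>x<m j.
           (\<Sum>\<tau>\<in>{\<tau>. \<tau> < t \<and> s \<tau> j = sg}.
               (U j ((a \<tau>)(j := x)) + P \<tau> j x) - (U j (a \<tau>) + P \<tau> j (a \<tau> j)))
           \<le> C * sqrt (real T)))"

definition eps_learns :: "nat \<Rightarrow> (nat \<Rightarrow> nat) \<Rightarrow> (nat \<Rightarrow> (nat \<Rightarrow> nat) \<Rightarrow> real)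
    \<Rightarrow> (nat \<Rightarrow> (nat \<Rightarrow> nat) \<Rightarrow> real) \<Rightarrow> real \<Rightarrow> bool" where
  "eps_learns n m U Ut eps \<longleftrightarrow>
     (\<exists>W :: nat \<Rightarrow> (nat \<Rightarrow> nat) \<Rightarrow> real. \<forall>i<n. \<forall>a\<in>profiles n m.
        \<bar>U i a + W i (restrict a ({..<n} - {i})) - Ut i a\<bar> \<le> eps)"

end

theory Submission
  imports Defs
begin

definition clipP :: "nat \<Rightarrow> (nat\<Rightarrow>real) \<Rightarrow> real \<Rightarrow> nat \<Rightarrow> real" where
  "clipP mi z lam x = (if x < mi then max 0 (min 2 (z x - lam)) else 0)"

lemma exists_lam: "\<exists>lam. (\<Sum>x<mi. max 0 (min 2 (z x - lam))) = real mi"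
proof -
  define S where "S = (\<Sum>x<mi. \<bar>z x\<bar>)"
  define g where "g = (\<lambda>lam. (\<Sum>x<mi. max 0 (min 2 (z x - lam))))"
  have zb: "\<bar>z x\<bar> \<le> S" if "x < mi" for x
    unfolding S_def using that by (intro member_le_sum) auto
  have S0: "0 \<le> S" unfolding S_def by (auto intro: sum_nonneg)
  have "g S = 0" unfolding g_def
    by (intro sum.neutral ballI) (use zb in fastforce)
  moreover have "g (-S - 2) = (\<Sum>x<mi. 2)" unfolding g_def
    by (intro sum.cong refl) (use zb in fastforce)
  ultimately have a: "g S \<le> real mi" "real mi \<le> g (-S-2)" by auto
  have "\<exists>lam. -S-2 \<le> lam \<and> lam \<le> S \<and> g lam = real mi"
    by (rule IVT2[of g S "real mi" "-S-2", OF a]) (use S0 in \<open>auto simp: g_def intro!: continuous_intros\<close>)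
  then show ?thesis unfolding g_def by blast
qed

lemma clip_in_polyP:
  assumes "(\<Sum>x<mi. max 0 (min 2 (z x - lam))) = real mi"
  shows "clipP mi z lam \<in> polyP mi"
  using assms unfolding polyP_def clipP_def by auto

lemma clip_VI:
  assumes "(\<Sum>x<mi. max 0 (min 2 (z x - lam))) = real mi" "p \<in> polyP mi"
  shows "(\<Sum>x<mi. (z x - clipP mi z lam x) * (p x - clipP mi z lam x)) \<le> 0"
proof -
  let ?P = "clipP mi z lam"
  have "(\<Sum>x<mi. (z x - ?P x) * (p x - ?P x)) \<le> (\<Sum>x<mi. lam * (p x - ?P x))"
  proof (rule sum_mono)
    fix x assume x: "x \<in> {..<mi}"
    have p02: "0 \<le> p x" "p x \<le> 2" using assms(2) x by (auto simp: polyP_def)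
    consider "z x - lam \<le> 0" | "0 \<le> z x - lam" "z x - lam \<le> 2" | "2 \<le> z x - lam" by linarith
    then show "(z x - ?P x) * (p x - ?P x) \<le> lam * (p x - ?P x)"
    proof cases
      case 1
      then have "?P x = 0" using x by (simp add: clipP_def)
      then show ?thesis using 1 p02 by (simp add: mult_right_mono)
    next
      case 2
      then have "?P x = z x - lam" using x by (simp add: clipP_def)
      then show ?thesis by simp
    next
      case 3
      then have "?P x = 2" using x by (simp add: clipP_def)
      then show ?thesis using 3 p02 by (simp add: mult_right_mono_neg)
    qed
  qed
  also have "\<dots> = lam * ((\<Sum>x<mi. p x) - (\<Sum>x<mi. ?P x))"
    by (simp add: sum_distrib_left sum_subtractf right_diff_distrib)
  also have "\<dots> = 0"
    using assms clip_in_polyP[OF assms(1)] by (simp add: polyP_def)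
  finally show ?thesis .
qed

lemma clip_pyth:
  assumes "(\<Sum>x<mi. max 0 (min 2 (z x - lam))) = real mi" "p \<in> polyP mi"
  shows "(\<Sum>x<mi. (z x - clipP mi z lam x)^2) + (\<Sum>x<mi. (clipP mi z lam x - p x)^2)
         \<le> (\<Sum>x<mi. (z x - p x)^2)"
proof -
  let ?P = "clipP mi z lam"
  have "(\<Sum>x<mi. (z x - p x)^2) = (\<Sum>x<mi. (z x - ?P x)^2) + (\<Sum>x<mi. (?P x - p x)^2)
        - 2 * (\<Sum>x<mi. (z x - ?P x) * (p x - ?P x))"
    by (simp add: sum.distrib sum_subtractf sum_distrib_left power2_eq_square algebra_simps)
  then show ?thesis using clip_VI[OF assms] by linarith
qed

lemma projP_eq:
  assumes "(\<Sum>x<mi. max 0 (min 2 (z x - lam))) = real mi"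
  shows "projP mi z = clipP mi z lam"
  unfolding projP_def
proof (rule the_equality)
  let ?P = "clipP mi z lam"
  show "?P \<in> polyP mi \<and> (\<forall>p'\<in>polyP mi. (\<Sum>x<mi. (z x - ?P x)^2) \<le> (\<Sum>x<mi. (z x - p' x)^2))"
  proof (intro conjI ballI)
    show "?P \<in> polyP mi" by (rule clip_in_polyP[OF assms])
    fix p' assume p': "p' \<in> polyP mi"
    have "0 \<le> (\<Sum>x<mi. (?P x - p' x)^2)" by (simp add: sum_nonneg)
    with clip_pyth[OF assms p'] show "(\<Sum>x<mi. (z x - ?P x)^2) \<le> (\<Sum>x<mi. (z x - p' x)^2)" by linarith
  qed
  fix p assume p: "p \<in> polyP mi \<and> (\<forall>p'\<in>polyP mi. (\<Sum>x<mi. (z x - p x)^2) \<le> (\<Sum>x<mi. (z x - p' x)^2))"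
  then have "(\<Sum>x<mi. (z x - p x)^2) \<le> (\<Sum>x<mi. (z x - ?P x)^2)"
    using clip_in_polyP[OF assms] by blast
  with clip_pyth[OF assms, of p] p have "(\<Sum>x<mi. (?P x - p x)^2) \<le> 0" by linarith
  then have "\<forall>x\<in>{..<mi}. (?P x - p x)^2 = 0"
  proof (intro sum_nonneg_eq_0_iff[THEN iffD1])
    have "0 \<le> (\<Sum>x<mi. (?P x - p x)^2)" by (simp add: sum_nonneg)
    with \<open>(\<Sum>x<mi. (?P x - p x)^2) \<le> 0\<close> show "(\<Sum>x<mi. (?P x - p x)^2) = 0" by linarith
  qed auto
  then have "\<forall>x<mi. p x = ?P x" by auto
  moreover have "\<forall>x\<ge>mi. p x = ?P x" using p by (auto simp: polyP_def clipP_def)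
  ultimately show "p = ?P" by (metis linorder_not_le ext)
qed

lemma projP_props:
  shows "projP mi z \<in> polyP mi"
    and "\<And>p. p \<in> polyP mi \<Longrightarrow> (\<Sum>x<mi. (projP mi z x - p x)^2) \<le> (\<Sum>x<mi. (z x - p x)^2)"
proof -
  obtain lam where l: "(\<Sum>x<mi. max 0 (min 2 (z x - lam))) = real mi" using exists_lam by blast
  show "projP mi z \<in> polyP mi" using projP_eq[OF l] clip_in_polyP[OF l] by simp
  fix p assume "p \<in> polyP mi"
  have "0 \<le> (\<Sum>x<mi. (z x - clipP mi z lam x)^2)" by (simp add: sum_nonneg)
  with clip_pyth[OF l \<open>p \<in> polyP mi\<close>] show "(\<Sum>x<mi. (projP mi z x - p x)^2) \<le> (\<Sum>x<mi. (z x - p x)^2)"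
    using projP_eq[OF l] by simp
qed

lemma pseq_in: "pseq mi eta acts l \<in> polyP mi"
proof (cases l)
  case 0 then show ?thesis by (simp add: polyP_def)
next
  case (Suc l') then show ?thesis by (simp add: projP_props(1))
qed

lemma step_sq:
  fixes p q :: "nat \<Rightarrow> real" and eta :: real
  assumes "a < mi"
  shows "(\<Sum>x<mi. (p x - eta * (if x = a then 1 else 0) - q x)^2)
       = (\<Sum>x<mi. (p x - q x)^2) - 2 * eta * (p a - q a) + eta^2"
proof -
  have "(\<Sum>x<mi. (p x - eta * (if x = a then 1 else 0) - q x)^2)
      = (\<Sum>x<mi. (p x - q x)^2 - (if x = a then 2 * eta * (p x - q x) - eta^2 else 0))"
    by (intro sum.cong refl) (simp add: power2_eq_square algebra_simps)
  also have "\<dots> = (\<Sum>x<mi. (p x - q x)^2) - (\<Sum>x<mi. (if x = a then 2 * eta * (p x - q x) - eta^2 else 0))"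
    by (simp add: sum_subtractf)
  also have "(\<Sum>x<mi. (if x = a then 2 * eta * (p x - q x) - eta^2 else 0)) = 2 * eta * (p a - q a) - eta^2"
    using assms by (simp add: sum.delta)
  finally show ?thesis by simp
qed

lemma ogd_raw:
  assumes "q \<in> polyP mi" "\<forall>l<L. acts l < mi"
  shows "2 * eta * (\<Sum>l<L. pseq mi eta acts l (acts l) - q (acts l))
         \<le> (\<Sum>x<mi. (pseq mi eta acts 0 x - q x)^2) - (\<Sum>x<mi. (pseq mi eta acts L x - q x)^2)
           + real L * eta^2"
  using assms(2)
proof (induction L)
  case 0 then show ?case by simp
next
  case (Suc L)
  let ?p = "pseq mi eta acts L"
  let ?z = "\<lambda>x. ?p x - eta * (if x = acts L then 1 else 0)"
  have a: "acts L < mi" using Suc.prems by simp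
  have "(\<Sum>x<mi. (pseq mi eta acts (Suc L) x - q x)^2) \<le> (\<Sum>x<mi. (?z x - q x)^2)"
    using projP_props(2)[where z="?z", OF assms(1)] by simp
  also have "\<dots> = (\<Sum>x<mi. (?p x - q x)^2) - 2 * eta * (?p (acts L) - q (acts L)) + eta^2"
    by (rule step_sq[OF a])
  finally have st: "(\<Sum>x<mi. (pseq mi eta acts (Suc L) x - q x)^2)
       \<le> (\<Sum>x<mi. (?p x - q x)^2) - 2 * eta * (?p (acts L) - q (acts L)) + eta^2" .
  from Suc.prems have "\<forall>l<L. acts l < mi" by simp
  with Suc.IH have ih: "2 * eta * (\<Sum>l<L. pseq mi eta acts l (acts l) - q (acts l))
         \<le> (\<Sum>x<mi. (pseq mi eta acts 0 x - q x)^2) - (\<Sum>x<mi. (?p x - q x)^2)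
           + real L * eta^2" by blast
  show ?case using ih st by (simp add: algebra_simps)
qed

lemma ogd:
  assumes "q \<in> polyP mi" "\<forall>l<L. acts l < mi" "0 < eta"
  shows "(\<Sum>l<L. pseq mi eta acts l (acts l) - q (acts l)) \<le> real mi / (2 * eta) + real L * eta / 2"
proof -
  have d0: "(\<Sum>x<mi. (pseq mi eta acts 0 x - q x)^2) \<le> real mi"
  proof -
    have "(\<Sum>x<mi. (pseq mi eta acts 0 x - q x)^2) \<le> (\<Sum>x<mi. 1)"
    proof (rule sum_mono)
      fix x assume x: "x \<in> {..<mi}"
      then have "0 \<le> q x" "q x \<le> 2" using assms(1) by (auto simp: polyP_def)
      then have "\<bar>1 - q x\<bar> \<le> 1" by linarith
      then have "(1 - q x)^2 \<le> 1^2" by (metis abs_le_square_iff abs_one)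
      then show "(pseq mi eta acts 0 x - q x)^2 \<le> 1" using x by simp
    qed
    then show ?thesis by simp
  qed
  have dL: "0 \<le> (\<Sum>x<mi. (pseq mi eta acts L x - q x)^2)" by (simp add: sum_nonneg)
  have "2 * eta * (\<Sum>l<L. pseq mi eta acts l (acts l) - q (acts l)) \<le> real mi + real L * eta^2"
    using ogd_raw[OF assms(1,2), of eta] d0 dL by linarith
  then have "(\<Sum>l<L. pseq mi eta acts l (acts l) - q (acts l)) \<le> (real mi + real L * eta^2) / (2 * eta)"
    using assms(3) by (simp add: field_simps)
  also have "\<dots> = real mi / (2 * eta) + real L * eta / 2"
    using assms(3) by (simp add: field_simps power2_eq_square)
  finally show ?thesis .
qed

lemma ogd_sqrt:
  assumes "q \<in> polyP mi" "\<forall>l<L. acts l < mi" "0 < mi" "0 < L"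
  shows "(\<Sum>l<L. pseq mi (sqrt (real mi / real L)) acts l (acts l) - q (acts l)) \<le> sqrt (real mi * real L)"
proof -
  let ?e = "sqrt (real mi / real L)"
  have e: "0 < ?e" using assms by simp
  have "real mi / (2 * ?e) + real L * ?e / 2 = sqrt (real mi * real L)"
  proof -
    obtain s1 s2 where s: "s1 = sqrt (real mi)" "s2 = sqrt (real L)" by blast
    have sm: "s1 > 0" "s2 > 0" using assms s by auto
    have "?e = s1 / s2" using s by (simp add: real_sqrt_divide)
    moreover have "real mi = s1 * s1" "real L = s2 * s2" using s by simp_all
    moreover have "sqrt (real mi * real L) = s1 * s2" using s by (simp add: real_sqrt_mult)
    ultimately show ?thesis using sm by (simp add: field_simps)
  qed
  with ogd[OF assms(1,2) e] show ?thesis by simp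
qed

lemma equalize:
  fixes f :: "nat \<Rightarrow> real"
  assumes "(\<Sum>x<mi. f x) = 0" "\<forall>x<mi. f x \<le> e" "x < mi"
  shows "\<bar>f x\<bar> \<le> real mi * e"
proof -
  have e0: "0 \<le> e"
  proof -
    have "0 \<le> (\<Sum>y<mi. e - f y)"
      using assms(2) by (intro sum_nonneg) auto
    also have "\<dots> = real mi * e" using assms(1) by (simp add: sum_subtractf)
    finally show ?thesis using assms(3) by (simp add: zero_le_mult_iff)
  qed
  have "(\<Sum>y<mi. f y) = f x + (\<Sum>y\<in>{..<mi}-{x}. f y)"
    using assms(3) by (simp add: sum.remove)
  moreover have "(\<Sum>y\<in>{..<mi}-{x}. f y) \<le> (\<Sum>y\<in>{..<mi}-{x}. e)"
    using assms(2) by (intro sum_mono) auto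
  moreover have "(\<Sum>y\<in>{..<mi}-{x}. e) = (real mi - 1) * e"
    using assms(3) by (simp add: of_nat_diff)
  ultimately have "- f x \<le> (real mi - 1) * e" using assms(1) by linarith
  moreover have "f x \<le> e" using assms by auto
  moreover have "e \<le> real mi * e" using assms(3) e0 by (simp add: mult_le_cancel_right1) 
  ultimately have "- f x \<le> real mi * e" "f x \<le> real mi * e" using e0 by (simp_all add: algebra_simps)
  then show ?thesis by (simp add: abs_le_iff)
qed

lemma cumulative:
  fixes r :: "nat \<Rightarrow> nat \<Rightarrow> real"
  assumes pre: "\<forall>y<mi. (\<Sum>k'<k. if sel k' then r k' y else 0) \<le> B"
    and post: "(\<Sum>k'<Suc k. if sel k' then r k' x else 0) \<le> B"
    and low: "\<forall>k'<k. sel k' \<longrightarrow> - beta k' \<le> (\<Sum>y<mi. r k' y)"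
    and B0: "0 \<le> B" and beta0: "\<forall>k'. 0 \<le> beta k'"
    and selk: "sel k" and x: "x < mi"
  shows "r k x \<le> real mi * B + (\<Sum>k'<k. beta k')"
proof -
  let ?R = "\<lambda>y. (\<Sum>k'<k. if sel k' then r k' y else 0)"
  have "(\<Sum>y<mi. ?R y) = (\<Sum>k'<k. if sel k' then (\<Sum>y<mi. r k' y) else 0)"
  proof -
    have "(\<Sum>y<mi. ?R y) = (\<Sum>k'<k. \<Sum>y<mi. if sel k' then r k' y else 0)"
      by (rule sum.swap)
    also have "\<dots> = (\<Sum>k'<k. if sel k' then (\<Sum>y<mi. r k' y) else 0)"
      by (intro sum.cong refl) auto
    finally show ?thesis .
  qed
  also have "\<dots> \<ge> (\<Sum>k'<k. - beta k')"
    using low beta0 by (intro sum_mono) (auto simp: le_minus_iff)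
  finally have s: "(\<Sum>y<mi. ?R y) \<ge> - (\<Sum>k'<k. beta k')" by (simp add: sum_negf)
  have "(\<Sum>y<mi. ?R y) = ?R x + (\<Sum>y\<in>{..<mi}-{x}. ?R y)"
    using x by (simp add: sum.remove)
  moreover have "(\<Sum>y\<in>{..<mi}-{x}. ?R y) \<le> (\<Sum>y\<in>{..<mi}-{x}. B)"
    using pre by (intro sum_mono) auto
  moreover have "(\<Sum>y\<in>{..<mi}-{x}. B) = (real mi - 1) * B"
    using x by (simp add: of_nat_diff)
  ultimately have "?R x \<ge> - (\<Sum>k'<k. beta k') - (real mi - 1) * B" using s by linarith
  moreover have "?R x + r k x \<le> B" using post selk by simp
  ultimately show ?thesis by (simp add: algebra_simps)
qed

lemma block_bound:
  fixes p :: "nat \<Rightarrow> nat \<Rightarrow> real" and acts :: "nat \<Rightarrow> nat"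
    and V :: "nat \<Rightarrow> nat \<Rightarrow> real" and dev :: "nat \<Rightarrow> real" and u :: "nat \<Rightarrow> real"
  assumes mi: "1 \<le> mi" and L: "0 < L"
    and pin: "\<forall>l. p l \<in> polyP mi"
    and ogd: "\<forall>q\<in>polyP mi. (\<Sum>l<L. p l (acts l) - q (acts l)) \<le> G"
    and acts: "\<forall>l<L. acts l < mi"
    and u01: "\<forall>x<mi. 0 \<le> u x \<and> u x \<le> 1"
    and Vdev: "\<forall>l<L. \<forall>x<mi. \<bar>V l x - u x\<bar> \<le> dev l"
  shows "- real mi * G - 2 * real mi * (\<Sum>l<L. dev l)
           \<le> (\<Sum>x<mi. \<Sum>l<L. V l x + p l x - V l (acts l) - p l (acts l))"
    and "\<forall>x<mi. real L * (u x + (1 / real L) * (\<Sum>l<L. p l x) - 1 - (1 / real mi) * (\<Sum>y<mi. u y))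
           \<le> (\<Sum>l<L. V l x + p l x - V l (acts l) - p l (acts l)) + G + 2 * (\<Sum>l<L. dev l)"
proof -
  define ub where "ub = (1 / real mi) * (\<Sum>y<mi. u y)"
  define q where "q = (\<lambda>y. if y < mi then 1 + ub - u y else 0)"
  have sumu: "(\<Sum>y<mi. u y) = real mi * ub" using mi by (simp add: ub_def)
  have ub01: "0 \<le> ub" "ub \<le> 1"
  proof -
    have "0 \<le> (\<Sum>y<mi. u y)" using u01 by (intro sum_nonneg) auto
    then show "0 \<le> ub" by (simp add: ub_def)
    have "(\<Sum>y<mi. u y) \<le> (\<Sum>y<mi. 1)" using u01 by (intro sum_mono) auto
    then show "ub \<le> 1" using mi by (simp add: ub_def field_simps)
  qed
  have qP: "q \<in> polyP mi"
  proof -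
    have "(\<Sum>x<mi. q x) = (\<Sum>x<mi. 1 + ub - u x)" by (simp add: q_def)
    also have "\<dots> = real mi + real mi * ub - real mi * ub" by (simp add: sum.distrib sum_subtractf sumu algebra_simps)
    finally show ?thesis using u01 ub01 by (auto simp: polyP_def q_def)
  qed
  have og: "(\<Sum>l<L. p l (acts l)) \<le> (\<Sum>l<L. q (acts l)) + G"
    using ogd[rule_format, OF qP] by (simp add: sum_subtractf)
  have sump: "(\<Sum>x<mi. p l x) = real mi" for l using pin by (simp add: polyP_def)
  have Vx: "V l x \<ge> u x - dev l" "V l x \<le> u x + dev l" if "l < L" "x < mi" for l x
  proof -
    have "\<bar>V l x - u x\<bar> \<le> dev l" using Vdev that by blast
    then show "V l x \<ge> u x - dev l" "V l x \<le> u x + dev l" by (auto simp: abs_le_iff)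
  qed
  have perl: "(\<Sum>x<mi. V l x + p l x - V l (acts l) - p l (acts l))
           \<ge> real mi * (q (acts l) - p l (acts l)) - 2 * real mi * dev l" if l: "l < L" for l
  proof -
    have a: "acts l < mi" using acts l by auto
    have "(\<Sum>x<mi. V l x + p l x - V l (acts l) - p l (acts l))
        = (\<Sum>x<mi. V l x) + real mi - real mi * V l (acts l) - real mi * p l (acts l)"
      by (simp add: sum.distrib sum_subtractf sump)
    moreover have "(\<Sum>x<mi. V l x) \<ge> (\<Sum>x<mi. u x - dev l)"
      using Vx(1)[OF l] by (intro sum_mono) auto
    moreover have "(\<Sum>x<mi. u x - dev l) = real mi * ub - real mi * dev l"
      by (simp add: sum_subtractf sumu)
    moreover have "real mi * V l (acts l) \<le> real mi * (u (acts l) + dev l)"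
      using Vx(2)[OF l a] by (simp add: mult_left_mono)
    moreover have "real mi * q (acts l) = real mi + real mi * ub - real mi * u (acts l)"
      using a by (simp add: q_def algebra_simps)
    moreover have "real mi * (q (acts l) - p l (acts l)) - 2 * real mi * dev l
       = real mi * q (acts l) - real mi * p l (acts l) - 2 * (real mi * dev l)" by (simp add: algebra_simps)
    moreover have "real mi * (u (acts l) + dev l) = real mi * u (acts l) + real mi * dev l" by (simp add: algebra_simps)
    ultimately show ?thesis by linarith
  qed
  have "(\<Sum>x<mi. \<Sum>l<L. V l x + p l x - V l (acts l) - p l (acts l))
      = (\<Sum>l<L. \<Sum>x<mi. V l x + p l x - V l (acts l) - p l (acts l))"
    by (rule sum.swap)
  also have "\<dots> \<ge> (\<Sum>l<L. real mi * (q (acts l) - p l (acts l)) - 2 * real mi * dev l)"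
    using perl by (intro sum_mono) auto
  also have "(\<Sum>l<L. real mi * (q (acts l) - p l (acts l)) - 2 * real mi * dev l)
     = real mi * ((\<Sum>l<L. q (acts l)) - (\<Sum>l<L. p l (acts l))) - 2 * real mi * (\<Sum>l<L. dev l)"
    by (simp only: sum_subtractf sum_distrib_left right_diff_distrib)
  finally have "(\<Sum>x<mi. \<Sum>l<L. V l x + p l x - V l (acts l) - p l (acts l))
      \<ge> real mi * ((\<Sum>l<L. q (acts l)) - (\<Sum>l<L. p l (acts l))) - 2 * real mi * (\<Sum>l<L. dev l)" .
  moreover have "real mi * ((\<Sum>l<L. q (acts l)) - (\<Sum>l<L. p l (acts l))) \<ge> - real mi * G"
  proof -
    have "-G \<le> (\<Sum>l<L. q (acts l)) - (\<Sum>l<L. p l (acts l))" using og by linarith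
    then have "real mi * (-G) \<le> real mi * ((\<Sum>l<L. q (acts l)) - (\<Sum>l<L. p l (acts l)))"
      by (rule mult_left_mono) simp
    then show ?thesis by simp
  qed
  ultimately show "- real mi * G - 2 * real mi * (\<Sum>l<L. dev l)
           \<le> (\<Sum>x<mi. \<Sum>l<L. V l x + p l x - V l (acts l) - p l (acts l))" by linarith
  show "\<forall>x<mi. real L * (u x + (1 / real L) * (\<Sum>l<L. p l x) - 1 - (1 / real mi) * (\<Sum>y<mi. u y))
           \<le> (\<Sum>l<L. V l x + p l x - V l (acts l) - p l (acts l)) + G + 2 * (\<Sum>l<L. dev l)"
  proof (intro allI impI)
    fix x assume x: "x < mi"
    have "(\<Sum>l<L. V l x + p l x - V l (acts l) - p l (acts l))
        \<ge> (\<Sum>l<L. u x + p l x - u (acts l) - p l (acts l) - 2 * dev l)"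
      using Vx x acts by (intro sum_mono) (smt (verit) lessThan_iff)
    also have "(\<Sum>l<L. u x + p l x - u (acts l) - p l (acts l) - 2 * dev l)
       = real L * u x + (\<Sum>l<L. p l x) - (\<Sum>l<L. u (acts l)) - (\<Sum>l<L. p l (acts l)) - 2 * (\<Sum>l<L. dev l)"
      by (simp add: sum.distrib sum_subtractf sum_distrib_left)
    finally have A: "(\<Sum>l<L. V l x + p l x - V l (acts l) - p l (acts l)) \<ge>
        real L * u x + (\<Sum>l<L. p l x) - (\<Sum>l<L. u (acts l)) - (\<Sum>l<L. p l (acts l)) - 2 * (\<Sum>l<L. dev l)" .
    have "(\<Sum>l<L. q (acts l)) = (\<Sum>l<L. 1 + ub - u (acts l))"
      using acts by (intro sum.cong) (auto simp: q_def)
    also have "\<dots> = real L * (1 + ub) - (\<Sum>l<L. u (acts l))"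
      by (simp add: sum_subtractf)
    finally have Q: "(\<Sum>l<L. q (acts l)) = real L * (1 + ub) - (\<Sum>l<L. u (acts l))" .
    have "real L * (u x + (1 / real L) * (\<Sum>l<L. p l x) - 1 - ub)
        = real L * u x + (\<Sum>l<L. p l x) - real L * (1 + ub)" using L by (simp add: algebra_simps)
    then show "real L * (u x + (1 / real L) * (\<Sum>l<L. p l x) - 1 - (1 / real mi) * (\<Sum>y<mi. u y))
           \<le> (\<Sum>l<L. V l x + p l x - V l (acts l) - p l (acts l)) + G + 2 * (\<Sum>l<L. dev l)"
      using A og Q unfolding ub_def by linarith
  qed
qed

lemma sum_shift_block: fixes a L :: nat shows "(\<Sum>\<tau>\<in>{a..<a+L}. g \<tau>) = (\<Sum>l<L. g (a + l))"
proof -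
  have "(\<Sum>\<tau>\<in>{0+a..<L+a}. g \<tau>) = (\<Sum>l\<in>{0..<L}. g (l + a))"
    by (rule sum.shift_bounds_nat_ivl)
  then show ?thesis by (simp add: atLeast0LessThan add.commute)
qed

lemma sum_blocks:
  fixes f :: "nat \<Rightarrow> real"
  assumes L: "0 < L"
  shows "sum f {\<tau>. \<tau> < k * L \<and> S (\<tau> div L)} = (\<Sum>k'<k. if S k' then (\<Sum>l<L. f (k' * L + l)) else 0)"
proof -
  have "{\<tau>. \<tau> < k * L \<and> S (\<tau> div L)} = {\<tau>\<in>{..<k*L}. S (\<tau> div L)}" by auto
  then have "sum f {\<tau>. \<tau> < k * L \<and> S (\<tau> div L)} = sum f {\<tau>\<in>{..<k*L}. S (\<tau> div L)}" by simp
  also have "\<dots> = (\<Sum>\<tau><k*L. if S (\<tau> div L) then f \<tau> else 0)"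
    by (rule sum.inter_filter) simp
  also have "\<dots> = (\<Sum>k'<k. \<Sum>\<tau>\<in>{k'*L..<k'*L+L}. if S (\<tau> div L) then f \<tau> else 0)"
    by (rule sum.nat_group[symmetric])
  also have "\<dots> = (\<Sum>k'<k. if S k' then (\<Sum>l<L. f (k' * L + l)) else 0)"
  proof (intro sum.cong refl)
    fix k' assume "k' \<in> {..<k}"
    have "(\<Sum>\<tau>\<in>{k'*L..<k'*L+L}. if S (\<tau> div L) then f \<tau> else 0)
        = (\<Sum>l<L. if S ((k'*L + l) div L) then f (k'*L+l) else 0)"
      by (rule sum_shift_block)
    also have "\<dots> = (\<Sum>l<L. if S k' then f (k'*L+l) else 0)"
      using L by (intro sum.cong refl) simp
    finally show "(\<Sum>\<tau>\<in>{k'*L..<k'*L+L}. if S (\<tau> div L) then f \<tau> else 0)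
        = (if S k' then (\<Sum>l<L. f (k' * L + l)) else 0)" by simp
  qed
  finally show ?thesis .
qed

lemma sum_upto_blocks:
  fixes f :: "nat \<Rightarrow> real"
  shows "(\<Sum>\<tau><k*L. f \<tau>) = (\<Sum>k'<k. \<Sum>l<L. f (k' * L + l))"
proof -
  have "(\<Sum>\<tau><k*L. f \<tau>) = (\<Sum>k'<k. \<Sum>\<tau>\<in>{k'*L..<k'*L+L}. f \<tau>)"
    by (rule sum.nat_group[symmetric])
  also have "\<dots> = (\<Sum>k'<k. \<Sum>l<L. f (k' * L + l))"
    by (intro sum.cong refl sum_shift_block)
  finally show ?thesis .
qed

lemma prod_ge: 
  assumes "\<forall>i<n. 2 \<le> (m::nat\<Rightarrow>nat) i"
  shows "2 ^ n \<le> (\<Prod>i<n. m i)" "n \<le> (\<Prod>i<n. m i)" "1 \<le> (\<Prod>i<n. m i)"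
proof -
  have "(\<Prod>i<n. (2::nat)) \<le> (\<Prod>i<n. m i)" using assms by (intro prod_mono) auto
  then show a: "2 ^ n \<le> (\<Prod>i<n. m i)" by simp
  have "n < 2 ^ n" by (rule less_exp)
  with a show "n \<le> (\<Prod>i<n. m i)" by linarith
  have "1 \<le> (2::nat) ^ n" by simp
  with a show "1 \<le> (\<Prod>i<n. m i)" by linarith
qed

lemma m_le_prod:
  assumes "\<forall>i<n. 2 \<le> (m::nat\<Rightarrow>nat) i" "i < n"
  shows "m i \<le> (\<Prod>i<n. m i)"
  using assms prod_ge(3)[OF assms(1)] by (intro dvd_imp_le dvd_prodI) auto

lemma card_opp:
  assumes "\<forall>i<n. 2 \<le> (m::nat\<Rightarrow>nat) i"
  shows "card (opp_profiles n m i) \<le> (\<Prod>i<n. m i)" "finite (opp_profiles n m i)"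
proof -
  have "card (opp_profiles n m i) = (\<Prod>j\<in>{..<n}-{i}. m j)"
    by (simp add: opp_profiles_def card_PiE)
  also have "\<dots> \<le> (\<Prod>i<n. m i)"
    using assms prod_ge(3)[OF assms] by (intro dvd_imp_le prod_dvd_prod_subset) auto
  finally show "card (opp_profiles n m i) \<le> (\<Prod>i<n. m i)" .
  show "finite (opp_profiles n m i)" by (simp add: opp_profiles_def finite_PiE)
qed

lemma length_blocks:
  assumes "\<forall>i<n. 2 \<le> (m::nat\<Rightarrow>nat) i" "valid_blocks n m blocks"
  shows "length blocks \<le> n * (\<Prod>i<n. m i)"
proof -
  have "distinct blocks" using assms(2) by (simp add: valid_blocks_def)
  then have "length blocks = card (set blocks)" by (simp add: distinct_card)
  also have "set blocks = Sigma {..<n} (opp_profiles n m)" using assms(2) by (auto simp: valid_blocks_def)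
  also have "card (Sigma {..<n} (opp_profiles n m)) = (\<Sum>i<n. card (opp_profiles n m i))"
    using card_opp(2)[OF assms(1)] by (simp add: card_SigmaI)
  also have "\<dots> \<le> (\<Sum>i<n. (\<Prod>i<n. m i))" using card_opp(1)[OF assms(1)] by (intro sum_mono) auto
  finally show ?thesis by simp
qed

lemma sum_m_le:
  assumes "\<forall>i<n. 2 \<le> (m::nat\<Rightarrow>nat) i"
  shows "(\<Sum>i<n. m i) \<le> n * (\<Prod>i<n. m i)"
proof -
  have "(\<Sum>i<n. m i) \<le> (\<Sum>i<n. (\<Prod>i<n. m i))" using m_le_prod[OF assms] by (intro sum_mono) auto
  then show ?thesis by simp
qed

lemma learn:
  fixes n :: nat and m :: "nat \<Rightarrow> nat" and blocks and L :: nat and C eps :: real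
    and U :: "nat \<Rightarrow> (nat \<Rightarrow> nat) \<Rightarrow> real" and a :: "nat \<Rightarrow> nat \<Rightarrow> nat"
  assumes m2: "\<forall>i<n. 2 \<le> m i" and C0: "0 \<le> C" and L0: "0 < L"
    and valid: "valid_blocks n m blocks"
    and U01: "\<forall>i<n. \<forall>b\<in>profiles n m. 0 \<le> U i b \<and> U i b \<le> 1"
    and ain: "\<forall>t<length blocks * L. a t \<in> profiles n m"
    and nr: "no_regret n m U (alg_pay m blocks L a) (alg_signal blocks L) a (length blocks * L) C"
    and acc: "\<forall>i<n. real (m i) * (real (m i) * C * sqrt (real (length blocks * L))
         + real (length blocks) * real (m i) * sqrt (real (m i) * real L)
         + 2 * real (m i) * (real (\<Sum>j<n. m j) * C * sqrt (real (length blocks * L)))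
         + sqrt (real (m i) * real L)
         + 2 * (real (\<Sum>j<n. m j) * C * sqrt (real (length blocks * L)))) / real L \<le> eps"
  shows "eps_learns n m U (alg_output n m blocks L a) eps"
proof -
  define N where "N = length blocks"
  define T where "T = N * L"
  define P where "P = alg_pay m blocks L a"
  define s where "s = alg_signal blocks L"
  define blk where "blk = (\<lambda>\<tau>. blocks ! (\<tau> div L))"
  define reg where "reg = (\<lambda>j \<tau> x. (U j ((a \<tau>)(j := x)) + P \<tau> j x) - (U j (a \<tau>) + P \<tau> j (a \<tau> j)))"
  define dev where "dev = (\<lambda>\<tau>. if (\<forall>j<n. j \<noteq> fst (blk \<tau>) \<longrightarrow> a \<tau> j = snd (blk \<tau>) j) then 0 else (1::real))"
  define Dt where "Dt = real (\<Sum>j<n. m j) * C * sqrt (real T)"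
  have blkset: "fst (blocks ! k) < n \<and> snd (blocks ! k) \<in> opp_profiles n m (fst (blocks ! k))" if "k < N" for k
  proof -
    have "blocks ! k \<in> set blocks" using that N_def by simp
    moreover have "set blocks = {(i, b). i < n \<and> b \<in> opp_profiles n m i}"
      using valid by (simp add: valid_blocks_def)
    ultimately have "blocks ! k \<in> {(i, b). i < n \<and> b \<in> opp_profiles n m i}" by simp
    then show ?thesis by (simp add: case_prod_beta)
  qed
  have blkdiv: "\<tau> div L < N" if "\<tau> < T" for \<tau>
    using that L0 unfolding T_def by (simp add: less_mult_imp_div_less)
  have ainT: "a \<tau> \<in> profiles n m" if "\<tau> < T" for \<tau> using ain that by (simp add: T_def N_def)
  have sig: "s \<tau> j = (if j = fst (blk \<tau>) then None else Some (snd (blk \<tau>) j))" for \<tau> j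
    unfolding s_def alg_signal_def blk_def by (simp add: case_prod_beta Let_def)
  have pay: "P \<tau> j x = (if j = fst (blk \<tau>) then block_iterate m blocks L a (\<tau> div L) (\<tau> mod L) x
      else (if x = snd (blk \<tau>) j then 2 else 0))" for \<tau> j x
    unfolding P_def alg_pay_def blk_def by (simp add: case_prod_beta Let_def)
  have nr': "\<And>j sg t x. j < n \<Longrightarrow> (sg = None \<or> (\<exists>y<m j. sg = Some y)) \<Longrightarrow> t \<le> T \<Longrightarrow> x < m j \<Longrightarrow>
      sum (\<lambda>\<tau>. reg j \<tau> x) {\<tau>. \<tau> < t \<and> s \<tau> j = sg} \<le> C * sqrt (real T)"
    using nr unfolding no_regret_def reg_def P_def s_def T_def N_def by blast
  have prof_upd: "(a \<tau>)(j := x) \<in> profiles n m" if "\<tau> < T" "j < n" "x < m j" for \<tau> j x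
    using ainT[OF that(1)] that(2,3) by (auto simp: profiles_def PiE_iff extensional_def)
  have dev0: "0 \<le> dev \<tau>" for \<tau> by (simp add: dev_def)
  have Dtot: "(\<Sum>\<tau><T. dev \<tau>) \<le> Dt"
  proof -
    define ind where "ind = (\<lambda>j y \<tau>. if s \<tau> j = Some y \<and> a \<tau> j \<noteq> y then (1::real) else 0)"
    have ind0: "0 \<le> ind j y \<tau>" for j y \<tau> by (simp add: ind_def)
    have d1: "dev \<tau> \<le> (\<Sum>j<n. \<Sum>y<m j. ind j y \<tau>)" if "\<tau> < T" for \<tau>
    proof (cases "dev \<tau> = 0")
      case True then show ?thesis using ind0 by (simp add: sum_nonneg)
    next
      case False
      then obtain j where j: "j<n" "j \<noteq> fst (blk \<tau>)" "a \<tau> j \<noteq> snd (blk \<tau>) j"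
        by (auto simp: dev_def split: if_splits)
      have k: "\<tau> div L < N" using blkdiv that .
      have y: "snd (blk \<tau>) j < m j" using blkset[OF k] j unfolding blk_def opp_profiles_def
        by (auto simp: PiE_iff)
      have i1: "ind j (snd (blk \<tau>) j) \<tau> = 1" using j by (simp add: ind_def sig)
      have "ind j (snd (blk \<tau>) j) \<tau> \<le> (\<Sum>y<m j. ind j y \<tau>)"
        using y ind0 by (intro member_le_sum) auto
      also have "\<dots> \<le> (\<Sum>j<n. \<Sum>y<m j. ind j y \<tau>)"
        using j(1) ind0 by (intro member_le_sum[of j "{..<n}" "\<lambda>j. \<Sum>y<m j. ind j y \<tau>"] sum_nonneg) auto
      finally show ?thesis using i1 False by (simp add: dev_def)
    qed
    have d2: "(\<Sum>\<tau><T. ind j y \<tau>) \<le> C * sqrt (real T)" if jy: "j < n" "y < m j" for j y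
    proof -
      have "(\<Sum>\<tau><T. ind j y \<tau>) = (\<Sum>\<tau><T. if s \<tau> j = Some y then (if a \<tau> j \<noteq> y then 1 else 0) else 0)"
        by (intro sum.cong refl) (simp add: ind_def)
      also have "\<dots> = (\<Sum>\<tau>\<in>{\<tau>\<in>{..<T}. s \<tau> j = Some y}. if a \<tau> j \<noteq> y then 1 else 0)"
        by (rule sum.inter_filter[symmetric]) simp
      also have "{\<tau>\<in>{..<T}. s \<tau> j = Some y} = {\<tau>. \<tau> < T \<and> s \<tau> j = Some y}" by auto
      also have "(\<Sum>\<tau>\<in>{\<tau>. \<tau> < T \<and> s \<tau> j = Some y}. if a \<tau> j \<noteq> y then 1 else 0)
          \<le> sum (\<lambda>\<tau>. reg j \<tau> y) {\<tau>. \<tau> < T \<and> s \<tau> j = Some y}"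
      proof (rule sum_mono)
        fix \<tau> assume "\<tau> \<in> {\<tau>. \<tau> < T \<and> s \<tau> j = Some y}"
        then have \<tau>: "\<tau> < T" "s \<tau> j = Some y" by auto
        then have jb: "j \<noteq> fst (blk \<tau>)" "snd (blk \<tau>) j = y" by (auto simp: sig split: if_splits)
        have Py: "P \<tau> j y = 2" using jb by (simp add: pay)
        have Pa: "P \<tau> j (a \<tau> j) = (if a \<tau> j = y then 2 else 0)" using jb by (auto simp: pay)
        have u1: "0 \<le> U j ((a \<tau>)(j:=y))" using U01 prof_upd[OF \<tau>(1) jy] jy by auto
        have u2: "U j (a \<tau>) \<le> 1" using U01 ainT[OF \<tau>(1)] jy by auto
        show "(if a \<tau> j \<noteq> y then 1 else 0) \<le> reg j \<tau> y"
        proof (cases "a \<tau> j = y")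
          case True
          then have "(a \<tau>)(j := y) = a \<tau>" by auto
          then show ?thesis using True Py Pa by (simp add: reg_def)
        next
          case False
          then show ?thesis using u1 u2 Py Pa by (simp add: reg_def)
        qed
      qed
      also have "\<dots> \<le> C * sqrt (real T)" using nr'[of j "Some y" T y] jy by auto
      finally show ?thesis .
    qed
    have "(\<Sum>\<tau><T. dev \<tau>) \<le> (\<Sum>\<tau><T. \<Sum>j<n. \<Sum>y<m j. ind j y \<tau>)" using d1 by (intro sum_mono) auto
    also have "\<dots> = (\<Sum>j<n. \<Sum>\<tau><T. \<Sum>y<m j. ind j y \<tau>)" by (rule sum.swap)
    also have "\<dots> = (\<Sum>j<n. \<Sum>y<m j. \<Sum>\<tau><T. ind j y \<tau>)" by (intro sum.cong refl sum.swap)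
    also have "\<dots> \<le> (\<Sum>j<n. \<Sum>y<m j. C * sqrt (real T))" using d2 by (intro sum_mono) auto
    also have "\<dots> = Dt" by (simp add: Dt_def sum_distrib_right mult.assoc)
    finally show ?thesis .
  qed
  have Dt0: "0 \<le> Dt" unfolding Dt_def using C0 by (intro mult_nonneg_nonneg) (auto simp: sum_nonneg)
  have divmod: "(k*L+l) div L = k" "(k*L+l) mod L = l" if "l < L" for k l
    using that by auto
  have kLl: "k*L+l < T" if "k < N" "l < L" for k l
  proof -
    have "k*L+l < Suc k * L" using that by simp
    also have "Suc k * L \<le> N * L" using that by (intro mult_le_mono1) simp
    finally show ?thesis by (simp add: T_def)
  qed
  define r where "r = (\<lambda>i k x. \<Sum>l<L. reg i (k*L+l) x)"
  have BF: "- real (m i) * sqrt (real (m i) * real L) - 2 * real (m i) * (\<Sum>l<L. dev (k*L+l))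
              \<le> (\<Sum>x<m i. r i k x)
        \<and> (\<forall>x<m i. real L * (U i ((snd (blocks!k))(i:=x)) + (1 / real L) * (\<Sum>l<L. block_iterate m blocks L a k l x) - 1
              - (1 / real (m i)) * (\<Sum>y<m i. U i ((snd (blocks!k))(i:=y))))
           \<le> r i k x + sqrt (real (m i) * real L) + 2 * (\<Sum>l<L. dev (k*L+l)))"
    if k: "k < N" and ik: "fst (blocks ! k) = i" for k i
  proof -
    define b where "b = snd (blocks ! k)"
    have i: "i < n" and b: "b \<in> opp_profiles n m i" using blkset[OF k] ik b_def by auto
    have mi: "1 \<le> m i" using m2 i by fastforce
    define p where "p = (\<lambda>l. block_iterate m blocks L a k l)"
    define acts where "acts = (\<lambda>l. a (k*L+l) i)"
    define V where "V = (\<lambda>l x. U i ((a (k*L+l))(i:=x)))"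
    define dv where "dv = (\<lambda>l. dev (k*L+l))"
    define u where "u = (\<lambda>x. U i (b(i:=x)))"
    have p_eq: "p l = pseq (m i) (sqrt (real (m i) / real L)) acts l" for l
      by (simp add: p_def acts_def block_iterate_def Let_def ik)
    have acts_lt: "\<forall>l<L. acts l < m i"
    proof (intro allI impI)
      fix l assume "l < L"
      then have "a (k*L+l) \<in> profiles n m" using ainT kLl k by blast
      then show "acts l < m i" using i by (auto simp: acts_def profiles_def PiE_iff)
    qed
    have bprof: "b(i:=x) \<in> profiles n m" if "x < m i" for x
      using b i that by (auto simp: profiles_def opp_profiles_def PiE_iff extensional_def)
    have blkk: "blk (k*L+l) = blocks ! k" if "l < L" for l using divmod[OF that] by (simp add: blk_def)
    have regeq: "reg i (k*L+l) x = V l x + p l x - V l (acts l) - p l (acts l)" if l: "l < L" for l x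
    proof -
      have "P (k*L+l) i y = p l y" for y using blkk[OF l] divmod[OF l] ik by (simp add: pay p_def)
      moreover have "(a (k*L+l))(i := acts l) = a (k*L+l)" by (simp add: acts_def)
      ultimately show ?thesis by (simp add: reg_def V_def acts_def)
    qed
    have Vdev: "\<forall>l<L. \<forall>x<m i. \<bar>V l x - u x\<bar> \<le> dv l"
    proof (intro allI impI)
      fix l x assume l: "l < L" and x: "x < m i"
      have \<tau>: "k*L+l < T" using kLl k l by blast
      show "\<bar>V l x - u x\<bar> \<le> dv l"
      proof (cases "\<forall>j<n. j \<noteq> i \<longrightarrow> a (k*L+l) j = b j")
        case True
        have "(a (k*L+l))(i:=x) = b(i:=x)"
        proof
          fix j
          show "((a (k*L+l))(i:=x)) j = (b(i:=x)) j"
          proof (cases "j = i")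
            case False
            show ?thesis
            proof (cases "j < n")
              case True with \<open>j \<noteq> i\<close> \<open>\<forall>j<n. j \<noteq> i \<longrightarrow> a (k*L+l) j = b j\<close> show ?thesis by simp
            next
              case jn: False
              have "a (k*L+l) j = undefined" using ainT[OF \<tau>] jn by (auto simp: profiles_def PiE_iff extensional_def)
              moreover have "b j = undefined" using b jn by (auto simp: opp_profiles_def PiE_iff extensional_def)
              ultimately show ?thesis using False by simp
            qed
          qed simp
        qed
        then show ?thesis using dev0 by (simp add: V_def u_def dv_def)
      next
        case False
        then have "dv l = 1" using blkk[OF l] ik by (auto simp: dv_def dev_def b_def)
        moreover have "0 \<le> V l x" "V l x \<le> 1" using U01 prof_upd[OF \<tau> i x] i by (auto simp: V_def)
        moreover have "0 \<le> u x" "u x \<le> 1" using U01 bprof[OF x] i by (auto simp: u_def)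
        ultimately show ?thesis by (simp add: abs_le_iff)
      qed
    qed
    have u01: "\<forall>x<m i. 0 \<le> u x \<and> u x \<le> 1" using U01 bprof i by (auto simp: u_def)
    have pin: "\<forall>l. p l \<in> polyP (m i)" using p_eq pseq_in by simp
    have ogdp: "\<forall>q\<in>polyP (m i). (\<Sum>l<L. p l (acts l) - q (acts l)) \<le> sqrt (real (m i) * real L)"
      using ogd_sqrt[OF _ acts_lt _ L0] mi p_eq by simp
    note BB = block_bound[OF mi L0 pin ogdp acts_lt u01 Vdev]
    have rr: "r i k x = (\<Sum>l<L. V l x + p l x - V l (acts l) - p l (acts l))" for x
      unfolding r_def by (intro sum.cong refl regeq) simp
    show ?thesis using BB unfolding dv_def u_def b_def by (simp add: rr p_def)
  qed
  have devsum: "(\<Sum>l<L. dev (k*L+l)) \<le> Dt" if "k < N" for k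
  proof -
    have "(\<Sum>l<L. dev (k*L+l)) \<le> (\<Sum>k'<N. \<Sum>l<L. dev (k'*L+l))"
      using that dev0 by (intro member_le_sum[of k "{..<N}" "\<lambda>k'. \<Sum>l<L. dev (k'*L+l)"] sum_nonneg) auto
    also have "\<dots> = (\<Sum>\<tau><T. dev \<tau>)" unfolding T_def by (rule sum_upto_blocks[symmetric])
    finally show ?thesis using Dtot by linarith
  qed
  have devsum2: "(\<Sum>k'<k. \<Sum>l<L. dev (k'*L+l)) \<le> Dt" if "k \<le> N" for k
  proof -
    have "(\<Sum>k'<k. \<Sum>l<L. dev (k'*L+l)) = (\<Sum>\<tau><k*L. dev \<tau>)" by (rule sum_upto_blocks[symmetric])
    also have "\<dots> \<le> (\<Sum>\<tau><T. dev \<tau>)"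
      using that dev0 unfolding T_def by (intro sum_mono2) (auto intro: mult_le_mono1 order.trans)
    finally show ?thesis using Dtot by linarith
  qed
  have prefix: "(\<Sum>k'<k. if fst (blocks ! k') = i then r i k' y else 0) \<le> C * sqrt (real T)"
    if "k \<le> N" "i < n" "y < m i" for k i y
  proof -
    have "{\<tau>. \<tau> < k * L \<and> s \<tau> i = None} = {\<tau>. \<tau> < k * L \<and> fst (blocks ! (\<tau> div L)) = i}"
      by (auto simp: sig blk_def)
    then have "sum (\<lambda>\<tau>. reg i \<tau> y) {\<tau>. \<tau> < k * L \<and> s \<tau> i = None}
        = sum (\<lambda>\<tau>. reg i \<tau> y) {\<tau>. \<tau> < k * L \<and> fst (blocks ! (\<tau> div L)) = i}" by simp
    also have "\<dots> = (\<Sum>k'<k. if fst (blocks ! k') = i then (\<Sum>l<L. reg i (k' * L + l) y) else 0)"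
      by (rule sum_blocks[OF L0])
    also have "\<dots> = (\<Sum>k'<k. if fst (blocks ! k') = i then r i k' y else 0)"
      unfolding r_def by simp
    finally have "sum (\<lambda>\<tau>. reg i \<tau> y) {\<tau>. \<tau> < k * L \<and> s \<tau> i = None}
        = (\<Sum>k'<k. if fst (blocks ! k') = i then r i k' y else 0)" .
    moreover have "k * L \<le> T" using that unfolding T_def by (intro mult_le_mono1)
    ultimately show ?thesis using nr'[of i None "k*L" y] that by auto
  qed
  show ?thesis unfolding eps_learns_def
  proof (intro exI[of _ "\<lambda>i b. - (1 + (1 / real (m i)) * (\<Sum>x<m i. U i (b(i:=x))))"] allI impI ballI)
    fix i act assume i: "i < n" and act: "act \<in> profiles n m"
    define b where "b = restrict act ({..<n} - {i})"
    have bo: "b \<in> opp_profiles n m i" using act unfolding b_def opp_profiles_def profiles_def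
      by (auto simp: PiE_iff)
    have "(i, b) \<in> set blocks" using valid i bo by (simp add: valid_blocks_def)
    then obtain k where k: "k < N" "blocks ! k = (i, b)" by (auto simp: in_set_conv_nth N_def)
    have dist: "distinct blocks" using valid by (simp add: valid_blocks_def)
    have the_k: "(THE k'. k' < length blocks \<and> blocks ! k' = (i, b)) = k"
    proof (rule the_equality)
      show "k < length blocks \<and> blocks ! k = (i, b)" using k N_def by simp
      fix k' assume "k' < length blocks \<and> blocks ! k' = (i, b)"
      then show "k' = k" using k dist N_def by (metis nth_eq_iff_index_eq)
    qed
    have out: "alg_output n m blocks L a i act = - (1 / real L) * (\<Sum>l<L. block_iterate m blocks L a k l (act i))"
      unfolding alg_output_def Let_def b_def[symmetric] the_k by simp
    have actb: "act = b(i := act i)"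
    proof
      fix j show "act j = (b(i := act i)) j"
        using act by (cases "j = i"; cases "j < n") (auto simp: b_def profiles_def PiE_iff extensional_def)
    qed
    have mi: "1 \<le> m i" using m2 i by fastforce
    have ik: "fst (blocks ! k) = i" and bk: "snd (blocks ! k) = b" using k by auto
    note BFk = BF[OF k(1) ik, unfolded bk]
    define f where "f = (\<lambda>x. U i (b(i:=x)) + (1 / real L) * (\<Sum>l<L. block_iterate m blocks L a k l x) - 1
              - (1 / real (m i)) * (\<Sum>y<m i. U i (b(i:=y))))"
    define G where "G = sqrt (real (m i) * real L)"
    define E where "E = real (m i) * C * sqrt (real T) + real N * real (m i) * G + 2 * real (m i) * Dt + G + 2 * Dt"
    have fsum: "(\<Sum>x<m i. f x) = 0"
    proof -
      have pin: "block_iterate m blocks L a k l \<in> polyP (m i)" for l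
        using pseq_in ik by (simp add: block_iterate_def Let_def)
      have "(\<Sum>x<m i. \<Sum>l<L. block_iterate m blocks L a k l x) = (\<Sum>l<L. \<Sum>x<m i. block_iterate m blocks L a k l x)"
        by (rule sum.swap)
      also have "\<dots> = real L * real (m i)" using pin by (simp add: polyP_def)
      finally have A: "(\<Sum>x<m i. \<Sum>l<L. block_iterate m blocks L a k l x) = real L * real (m i)" .
      have "(\<Sum>x<m i. f x) = (\<Sum>x<m i. U i (b(i:=x))) + (1 / real L) * (\<Sum>x<m i. \<Sum>l<L. block_iterate m blocks L a k l x)
          - real (m i) - real (m i) * ((1 / real (m i)) * (\<Sum>y<m i. U i (b(i:=y))))"
        unfolding f_def by (simp add: sum.distrib sum_subtractf sum_distrib_left)
      also have "\<dots> = 0" using A mi L0 by simp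
      finally show ?thesis .
    qed
    have fle: "\<forall>x<m i. f x \<le> E / real L"
    proof (intro allI impI)
      fix x assume x: "x < m i"
      define beta where "beta = (\<lambda>k'. real (m i) * G + 2 * real (m i) * (\<Sum>l<L. dev (k'*L+l)))"
      have beta0: "\<forall>k'. 0 \<le> beta k'" using dev0 by (simp add: beta_def G_def sum_nonneg)
      have low: "\<forall>k'<k. fst (blocks ! k') = i \<longrightarrow> - beta k' \<le> (\<Sum>y<m i. r i k' y)"
        using BF k(1) by (simp add: beta_def G_def)
      have cum: "r i k x \<le> real (m i) * (C * sqrt (real T)) + (\<Sum>k'<k. beta k')"
      proof -
        have post: "(\<Sum>k'<Suc k. if fst (blocks ! k') = i then r i k' x else 0) \<le> C * sqrt (real T)"
          using prefix[of "Suc k" i x] k(1) i x by simp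
        have pre: "\<forall>y<m i. (\<Sum>k'<k. if fst (blocks ! k') = i then r i k' y else 0) \<le> C * sqrt (real T)"
          using prefix k(1) i by simp
        show ?thesis
          by (rule cumulative[where sel="\<lambda>k'. fst (blocks ! k') = i", OF pre post low _ beta0 _ x])
             (use C0 ik in auto)
      qed
      have "(\<Sum>k'<k. beta k') = real k * (real (m i) * G) + 2 * real (m i) * (\<Sum>k'<k. \<Sum>l<L. dev (k'*L+l))"
        by (simp add: beta_def sum.distrib sum_distrib_left)
      also have "\<dots> \<le> real N * (real (m i) * G) + 2 * real (m i) * Dt"
      proof (intro add_mono mult_right_mono mult_left_mono)
        show "real k \<le> real N" using k by simp
        show "(\<Sum>k'<k. \<Sum>l<L. dev (k'*L+l)) \<le> Dt" using devsum2 k by simp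
      qed (auto simp: G_def)
      finally have sb: "(\<Sum>k'<k. beta k') \<le> real N * (real (m i) * G) + 2 * real (m i) * Dt" .
      have "real L * f x \<le> r i k x + G + 2 * (\<Sum>l<L. dev (k*L+l))"
        using BFk x by (simp add: f_def G_def)
      also have "\<dots> \<le> E" using cum sb devsum[OF k(1)] unfolding E_def by (simp add: algebra_simps)
      finally show "f x \<le> E / real L" using L0 by (simp add: field_simps)
    qed
    have "\<bar>f (act i)\<bar> \<le> real (m i) * (E / real L)"
      by (rule equalize[OF fsum fle]) (use act i in \<open>auto simp: profiles_def PiE_iff\<close>)
    also have "\<dots> \<le> eps" using acc i unfolding E_def G_def Dt_def T_def N_def by (simp add: algebra_simps)
    finally have "\<bar>f (act i)\<bar> \<le> eps" .
    moreover have "U i act = U i (b(i := act i))" using actb by simp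
    ultimately show "\<bar>U i act + - (1 + 1 / real (m i) * (\<Sum>x<m i. U i ((restrict act ({..<n} - {i}))(i := x))))
        - alg_output n m blocks L a i act\<bar> \<le> eps"
      unfolding out b_def[symmetric] by (simp add: f_def algebra_simps)
  qed
qed

lemma mm: "(a::real) \<le> A \<Longrightarrow> b \<le> B \<Longrightarrow> 0 \<le> a \<Longrightarrow> 0 \<le> b \<Longrightarrow> a * b \<le> A * B"
  by (rule mult_mono) auto

lemma poly_bound:
  fixes x1 x2 x3 x4 x5 M C :: real
  assumes "0 \<le> x1" "0 \<le> x2" "0 \<le> x3" "0 \<le> x4" "0 \<le> x5"
    and "x1 \<le> M" "x2 \<le> M" "x3 \<le> M^2" "x4 \<le> M" "x5 \<le> M^2" "1 \<le> M" "0 \<le> C"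
  shows "x1 * (x1 * C * x2 + x3 * x1 * x4 + 2 * x1 * (x5 * C * x2) + x4 + 2 * (x5 * C * x2))
         \<le> 7 * M^5 * (C + 1)"
proof -
  have M0: "0 \<le> M" using assms by simp
  have t1: "x1 * (x1 * C * x2) \<le> M * (M * C * M)"
    using assms M0 by (intro mm) auto
  have t2: "x1 * (x3 * x1 * x4) \<le> M * (M^2 * M * M)"
    using assms M0 by (intro mm) auto
  have t3: "x1 * (2 * x1 * (x5 * C * x2)) \<le> M * (2 * M * (M^2 * C * M))"
    using assms M0 by (intro mm) auto
  have t4: "x1 * x4 \<le> M * M" using assms M0 by (intro mm) auto
  have t5: "x1 * (2 * (x5 * C * x2)) \<le> M * (2 * (M^2 * C * M))"
    using assms M0 by (intro mm) auto
  have p: "M^k \<le> M^5" if "k \<le> 5" for k by (rule power_increasing[OF that assms(11)])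
  have p3: "M^3 * C \<le> M^5 * C" using p[of 3] assms(12) by (rule mult_right_mono) simp
  have p4: "M^4 * C \<le> M^5 * C" using p[of 4] assms(12) by (rule mult_right_mono) simp
  have p2: "M^2 \<le> M^5" using p[of 2] by simp
  have e1: "M * (M * C * M) = M^3 * C" by (simp add: power_def algebra_simps eval_nat_numeral)
  have e2: "M * (M^2 * M * M) = M^5" by (simp add: algebra_simps eval_nat_numeral)
  have e3: "M * (2 * M * (M^2 * C * M)) = 2 * (M^5 * C)" by (simp add: algebra_simps eval_nat_numeral)
  have e4: "M * M = M^2" by (simp add: power2_eq_square)
  have e5: "M * (2 * (M^2 * C * M)) = 2 * (M^4 * C)" by (simp add: algebra_simps eval_nat_numeral)
  have "x1 * (x1 * C * x2 + x3 * x1 * x4 + 2 * x1 * (x5 * C * x2) + x4 + 2 * (x5 * C * x2))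
     = x1 * (x1 * C * x2) + x1 * (x3 * x1 * x4) + x1 * (2 * x1 * (x5 * C * x2)) + x1 * x4 + x1 * (2 * (x5 * C * x2))"
    by (simp add: algebra_simps)
  also have "\<dots> \<le> M^3 * C + M^5 + 2 * (M^5 * C) + M^2 + 2 * (M^4 * C)"
    using t1 t2 t3 t4 t5 e1 e2 e3 e4 e5 by linarith
  also have "\<dots> \<le> 7 * M^5 * (C + 1)"
  proof -
    have "0 \<le> M^5" using M0 by simp
    moreover have "0 \<le> M^5 * C" using M0 assms(12) by simp
    moreover have "7 * M^5 * (C + 1) = 7 * M^5 + 7 * (M^5 * C)" by (simp add: algebra_simps)
    ultimately show ?thesis using p2 p3 p4 by linarith
  qed
  finally show ?thesis .
qed

theorem theorem5p4:
  shows "\<exists>(K::real) (d::nat). \<forall>(n::nat) (m::nat \<Rightarrow> nat) (eps::real) (C::real).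
     (\<forall>i<n. 2 \<le> m i) \<and> 0 < eps \<and> eps \<le> 1 \<and> 0 \<le> C \<longrightarrow>
     (\<exists>L::nat. \<forall>blocks. valid_blocks n m blocks \<longrightarrow>
        real (length blocks * L) \<le> K * (real (\<Prod>i<n. m i) * (C + 1)) ^ d / eps ^ 2 \<and>
        (\<forall>(U :: nat \<Rightarrow> (nat \<Rightarrow> nat) \<Rightarrow> real) (a :: nat \<Rightarrow> nat \<Rightarrow> nat).
           (\<forall>i<n. \<forall>b\<in>profiles n m. 0 \<le> U i b \<and> U i b \<le> 1) \<longrightarrow>
           (\<forall>t<length blocks * L. a t \<in> profiles n m) \<longrightarrow>
           no_regret n m U (alg_pay m blocks L a) (alg_signal blocks L) a
             (length blocks * L) C \<longrightarrow>
           eps_learns n m U (alg_output n m blocks L a) eps))"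
proof (rule exI[of _ "98::real"], rule exI[of _ "12::nat"], intro allI impI)
  fix n :: nat and m :: "nat \<Rightarrow> nat" and eps C :: real
  assume H: "(\<forall>i<n. 2 \<le> m i) \<and> 0 < eps \<and> eps \<le> 1 \<and> 0 \<le> C"
  then have m2: "\<forall>i<n. 2 \<le> m i" and eps0: "0 < eps" and eps1: "eps \<le> 1" and C0: "0 \<le> C" by auto
  define Mn where "Mn = (\<Prod>i<n. m i)"
  define M where "M = real Mn"
  define Z where "Z = 7 * M^5 * (C+1) / eps"
  define L where "L = nat \<lceil>Z^2\<rceil>"
  have Mn1: "1 \<le> Mn" using prod_ge(3)[OF m2] by (simp add: Mn_def)
  have M1: "1 \<le> M" using Mn1 by (simp add: M_def)
  have M0: "0 \<le> M" using M1 by simp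
  have "1 \<le> M^5" using M1 by simp
  moreover have "1 \<le> C + 1" using C0 by simp
  ultimately have "1 * 1 \<le> M^5 * (C+1)" using M0 by (intro mult_mono) auto
  then have "1 \<le> M^5 * (C+1)" by simp
  then have num: "eps \<le> 7 * M^5 * (C+1)" using eps1 by simp
  have Z1: "1 \<le> Z" unfolding Z_def using num eps0 by (simp add: le_divide_eq)
  have Z0: "0 < Z" using Z1 by simp
  have Zsq1: "1 \<le> Z^2" using Z1 by (simp add: one_le_power)
  have LZ: "Z^2 \<le> real L" unfolding L_def using Zsq1 by linarith
  have LZ2: "real L \<le> 2 * Z^2"
  proof -
    have "real L = real_of_int \<lceil>Z^2\<rceil>" unfolding L_def using Zsq1 by simp
    also have "\<dots> \<le> Z^2 + 1" by linarith
    finally show ?thesis using Zsq1 by linarith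
  qed
  have L0: "0 < L" using LZ Zsq1 by simp
  have sZ: "Z \<le> sqrt (real L)" using LZ by (simp add: real_le_rsqrt)
  show "\<exists>L::nat. \<forall>blocks. valid_blocks n m blocks \<longrightarrow>
        real (length blocks * L) \<le> 98 * (real (\<Prod>i<n. m i) * (C + 1)) ^ 12 / eps ^ 2 \<and>
        (\<forall>(U :: nat \<Rightarrow> (nat \<Rightarrow> nat) \<Rightarrow> real) (a :: nat \<Rightarrow> nat \<Rightarrow> nat).
           (\<forall>i<n. \<forall>b\<in>profiles n m. 0 \<le> U i b \<and> U i b \<le> 1) \<longrightarrow>
           (\<forall>t<length blocks * L. a t \<in> profiles n m) \<longrightarrow>
           no_regret n m U (alg_pay m blocks L a) (alg_signal blocks L) a
             (length blocks * L) C \<longrightarrow>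
           eps_learns n m U (alg_output n m blocks L a) eps)"
  proof (intro exI[of _ L] allI impI conjI)
    fix blocks assume valid: "valid_blocks n m blocks"
    have "length blocks \<le> n * Mn" using length_blocks[OF m2 valid] by (simp add: Mn_def)
    also have "\<dots> \<le> Mn * Mn" using prod_ge(2)[OF m2] by (simp add: Mn_def)
    finally have NM: "real (length blocks) \<le> M^2" unfolding M_def power2_eq_square
      by (metis of_nat_le_iff of_nat_mult)
    show "real (length blocks * L) \<le> 98 * (real (\<Prod>i<n. m i) * (C + 1)) ^ 12 / eps ^ 2"
    proof -
      have "real (length blocks * L) \<le> M^2 * (2 * Z^2)"
        using NM LZ2 by (simp add: mult_mono)
      also have "M^2 * (2 * Z^2) = 98 * (M^12 * (C+1)^2) / eps^2"
        unfolding Z_def by (simp add: power_divide power_mult_distrib field_simps eval_nat_numeral)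
      also have "\<dots> \<le> 98 * (M^12 * (C+1)^12) / eps^2"
      proof -
        have "(C+1)^2 \<le> (C+1)^12" using C0 by (intro power_increasing) auto
        then have "M^12 * (C+1)^2 \<le> M^12 * (C+1)^12" using M0 by (simp add: mult_left_mono)
        then show ?thesis using eps0 by (simp add: divide_right_mono)
      qed
      also have "\<dots> = 98 * (real (\<Prod>i<n. m i) * (C + 1)) ^ 12 / eps ^ 2"
        by (simp add: M_def Mn_def power_mult_distrib)
      finally show ?thesis .
    qed
  next
    fix blocks U a
    assume valid: "valid_blocks n m blocks"
      and U01: "\<forall>i<n. \<forall>b\<in>profiles n m. 0 \<le> U i b \<and> U i b \<le> 1"
      and ain: "\<forall>t<length blocks * L. a t \<in> profiles n m"
      and nr: "no_regret n m U (alg_pay m blocks L a) (alg_signal blocks L) a (length blocks * L) C"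
    have "length blocks \<le> n * Mn" using length_blocks[OF m2 valid] by (simp add: Mn_def)
    also have "\<dots> \<le> Mn * Mn" using prod_ge(2)[OF m2] by (simp add: Mn_def)
    finally have NM: "real (length blocks) \<le> M^2" unfolding M_def power2_eq_square
      by (metis of_nat_le_iff of_nat_mult)
    have SM: "real (\<Sum>j<n. m j) \<le> M^2"
    proof -
      have "(\<Sum>j<n. m j) \<le> n * Mn" using sum_m_le[OF m2] by (simp add: Mn_def)
      also have "\<dots> \<le> Mn * Mn" using prod_ge(2)[OF m2] by (simp add: Mn_def)
      finally show ?thesis unfolding M_def power2_eq_square by (metis of_nat_le_iff of_nat_mult)
    qed
    show "eps_learns n m U (alg_output n m blocks L a) eps"
    proof (rule learn[OF m2 C0 L0 valid U01 ain nr], intro allI impI)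
      fix i assume i: "i < n"
      define s where "s = sqrt (real L)"
      define x1 where "x1 = real (m i)"
      define x2 where "x2 = sqrt (real (length blocks))"
      define x3 where "x3 = real (length blocks)"
      define x4 where "x4 = sqrt (real (m i))"
      define x5 where "x5 = real (\<Sum>j<n. m j)"
      have s0: "0 < s" using L0 by (simp add: s_def)
      have sZ': "Z \<le> s" using sZ by (simp add: s_def)
      have "m i \<le> Mn" using m_le_prod[OF m2 i] by (simp add: Mn_def)
      then have x1M: "x1 \<le> M" by (simp add: x1_def M_def)
      have "2 \<le> m i" using m2 i by blast
      then have x11: "1 \<le> x1" by (simp add: x1_def)
      have x2M: "x2 \<le> M"
      proof -
        have "x2 \<le> sqrt (M^2)" unfolding x2_def using NM by (simp only: real_sqrt_le_iff)
        then show ?thesis using M0 by simp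
      qed
      have x4M: "x4 \<le> M"
      proof -
        have "x1 * 1 \<le> x1 * x1" using x11 by (intro mult_left_mono) auto
        then have "x1 \<le> x1^2" by (simp add: power2_eq_square)
        then have "sqrt x1 \<le> sqrt (x1^2)" by (simp only: real_sqrt_le_iff)
        then have "x4 \<le> x1" using x11 by (simp add: x4_def x1_def)
        then show ?thesis using x1M by simp
      qed
      have bound: "x1 * (x1 * C * x2 + x3 * x1 * x4 + 2 * x1 * (x5 * C * x2) + x4 + 2 * (x5 * C * x2))
         \<le> 7 * M^5 * (C + 1)"
        by (rule poly_bound) (use x1M x2M x4M NM SM M1 C0 x11 in \<open>auto simp: x2_def x3_def x4_def x5_def sum_nonneg\<close>)
      have sq1: "sqrt (real (length blocks * L)) = x2 * s" by (simp add: x2_def s_def real_sqrt_mult)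
      have sq2: "sqrt (real (m i) * real L) = x4 * s" by (simp add: x4_def s_def real_sqrt_mult)
      have Ls: "real L = s * s" by (simp add: s_def)
      have "real (m i) * (real (m i) * C * sqrt (real (length blocks * L))
         + real (length blocks) * real (m i) * sqrt (real (m i) * real L)
         + 2 * real (m i) * (real (\<Sum>j<n. m j) * C * sqrt (real (length blocks * L)))
         + sqrt (real (m i) * real L)
         + 2 * (real (\<Sum>j<n. m j) * C * sqrt (real (length blocks * L)))) / real L
        = x1 * (x1 * C * (x2 * s) + x3 * x1 * (x4 * s) + 2 * x1 * (x5 * C * (x2 * s)) + x4 * s + 2 * (x5 * C * (x2 * s))) / real L"
        by (simp only: sq1 sq2 x1_def x3_def x5_def)
      also have "\<dots> = (x1 * (x1 * C * x2 + x3 * x1 * x4 + 2 * x1 * (x5 * C * x2) + x4 + 2 * (x5 * C * x2))) * s / (s * s)"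
        by (simp only: Ls) (simp add: algebra_simps)
      also have "\<dots> = x1 * (x1 * C * x2 + x3 * x1 * x4 + 2 * x1 * (x5 * C * x2) + x4 + 2 * (x5 * C * x2)) / s"
        using s0 by simp
      also have "\<dots> \<le> 7 * M^5 * (C + 1) / s" using bound s0 by (simp add: divide_right_mono)
      also have "\<dots> \<le> 7 * M^5 * (C + 1) / Z"
        using sZ' Z0 M0 C0 by (intro divide_left_mono) auto
      also have "\<dots> = eps" unfolding Z_def using eps0 Z0 num by (simp add: field_simps)
      finally show "real (m i) * (real (m i) * C * sqrt (real (length blocks * L))
         + real (length blocks) * real (m i) * sqrt (real (m i) * real L)
         + 2 * real (m i) * (real (\<Sum>j<n. m j) * C * sqrt (real (length blocks * L)))
         + sqrt (real (m i) * real L)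
         + 2 * (real (\<Sum>j<n. m j) * C * sqrt (real (length blocks * L)))) / real L \<le> eps" .
    qed
  qed
qed

end
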